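(* Let $G$ be a group of order $q$ in which the discrete logarithm problem is hard, and let $g,h$ be randomly chosen generators of $G$. For rounds $k=1,\dots,l$, let participant $P_i$ hold $K_i^{(k)},r_i^{(k)}\in\mathbb{Z}_q$ and commitment $c_i^{(k)}=g^{K_i^{(k)}}h^{r_i^{(k)}}$, and let its ciphertext of round $k$ be $O_i^{(k)}\in\mathbb{Z}_q$, which encodes the message $O_i^{(k)}-K_i^{(k)}$ (encoding no message if this equals $0$). If a poly-time participant $P_i$ generates $(O_i^{(1)},c_i^{(1)}),\dots,(O_i^{(l)},c_i^{(l)})$ and $P_i$ knows $\alpha\in\mathbb{Z}_q$ such that \[ \bigwedge_{k=2}^{l}\left(\left(c_i^{(1)}\prod_{j=2}^{k}(c_i^{(j)})^{-1}=g^{O_i^{(1)}-\sum_{j=2}^{k}O_i^{(j)}}h^{\alpha}\right)\vee\left(c_i^{(k)}=g^{O_i^{(k)}}h^{\alpha}\right)\right), \] then at most one ciphertext among $O_i^{(2)},\dots,O_i^{(l)}$ encodes the same message as $O_i^{(1)}$, while the other ciphertexts among $O_i^{(2)},\dots,O_i^{(l)}$ encode no message.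
   Context: Setting: dining cryptographers protocol with Pedersen commitments. In each round $k$, each pair $P_i,P_j$ shares $K_{ij}^{(k)},r_{ij}^{(k)}\in\mathbb{Z}_q$ with $K_{ji}^{(k)}=-K_{ij}^{(k)}$, $r_{ji}^{(k)}=-r_{ij}^{(k)}$; $K_i^{(k)}=\sum_j K_{ij}^{(k)}$, $r_i^{(k)}=\sum_j r_{ij}^{(k)}$, $c_i^{(k)}=\prod_j g^{K_{ij}^{(k)}}h^{r_{ij}^{(k)}}$. "Poly-time" means probabilistic polynomial-time, unable (by the discrete logarithm assumption) to compute $\log_h g$. *)

theory Defs
  imports "HOL-Algebra.Algebra" "HOL-Number_Theory.Cong"
begin

definition pcommit :: "('a, 'b) monoid_scheme \<Rightarrow> 'a \<Rightarrow> 'a \<Rightarrow> int \<Rightarrow> int \<Rightarrow> 'a" where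
  "pcommit G g h a b = (g [^]\<^bsub>G\<^esub> a) \<otimes>\<^bsub>G\<^esub> (h [^]\<^bsub>G\<^esub> b)"

text \<open>From such a pair
  one computes log_h g = (b' - b)/(a - a') in Z_q; this is what the discrete logarithm
  assumption rules out for a poly-time party.\<close>
definition pcollision :: "('a, 'b) monoid_scheme \<Rightarrow> int \<Rightarrow> 'a \<Rightarrow> 'a \<Rightarrow> int \<times> int \<Rightarrow> int \<times> int \<Rightarrow> bool" where
  "pcollision G q g h p p' =
     (\<not> ([fst p = fst p'] (mod q) \<and> [snd p = snd p'] (mod q)) \<and>
      pcommit G g h (fst p) (snd p) = pcommit G g h (fst p') (snd p'))"

end

theory Submission
  imports Defs
begin

context comm_group begin

lemma pc_closed[simp]: "g \<in> carrier G \<Longrightarrow> h \<in> carrier G \<Longrightarrow> pcommit G g h a b \<in> carrier G"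
  unfolding pcommit_def by simp

lemma pc_mult: "g \<in> carrier G \<Longrightarrow> h \<in> carrier G \<Longrightarrow>
  pcommit G g h a b \<otimes> pcommit G g h a' b' = pcommit G g h (a+a') (b+b')"
  unfolding pcommit_def by (simp add: int_pow_mult m_ac)

lemma pc_inv: "g \<in> carrier G \<Longrightarrow> h \<in> carrier G \<Longrightarrow>
  inv (pcommit G g h a b) = pcommit G g h (-a) (-b)"
  unfolding pcommit_def by (simp add: inv_mult int_pow_neg)

lemma pc_finprod:
  assumes "finite A" "g \<in> carrier G" "h \<in> carrier G"
  shows "finprod G (\<lambda>j. pcommit G g h (a j) (b j)) A = pcommit G g h (sum a A) (sum b A)"
  using assms(1)
proof (induction A rule: finite_induct)
  case empty
  then show ?case using assms by (simp add: pcommit_def)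
next
  case (insert x F)
  then show ?case using assms by (simp add: Pi_def pc_mult)
qed

end

lemma comb_aux:
  fixes A :: "nat \<Rightarrow> int" and m :: int
  assumes "\<forall>k\<in>{2..l}. [(\<Sum>j=2..k. A j) = A 1] (mod m) \<or> [A k = 0] (mod m)"
  shows "((\<forall>k\<in>{2..l}. [A k = 0] (mod m)) \<and> [(\<Sum>j=2..l. A j) = 0] (mod m)) \<or>
    (\<exists>s\<in>{2..l}. [A s = A 1] (mod m) \<and> (\<forall>k\<in>{2..l}-{s}. [A k = 0] (mod m))
       \<and> [(\<Sum>j=2..l. A j) = A 1] (mod m))"
  using assms
proof (induction l)
  case 0
  then show ?case by simp
next
  case (Suc l)
  have IH: "((\<forall>k\<in>{2..l}. [A k = 0] (mod m)) \<and> [(\<Sum>j=2..l. A j) = 0] (mod m)) \<or>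
    (\<exists>s\<in>{2..l}. [A s = A 1] (mod m) \<and> (\<forall>k\<in>{2..l}-{s}. [A k = 0] (mod m))
       \<and> [(\<Sum>j=2..l. A j) = A 1] (mod m))"
    using Suc by auto
  show ?case
  proof (cases "Suc l < 2")
    case True
    then show ?thesis by simp
  next
    case False
    have sumeq: "(\<Sum>j=2..Suc l. A j) = (\<Sum>j=2..l. A j) + A (Suc l)"
      using False by (simp add: sum.cl_ivl_Suc)
    have iv: "{2..Suc l} = insert (Suc l) {2..l}" using False by auto
    have hk: "[(\<Sum>j=2..Suc l. A j) = A 1] (mod m) \<or> [A (Suc l) = 0] (mod m)"
    proof -
      have "Suc l \<in> {2..Suc l}" using False by simp
      then show ?thesis using Suc.prems by blast
    qed
    show ?thesis
    proof (cases "[A (Suc l) = 0] (mod m)")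
      case z: True
      have s: "[(\<Sum>j=2..Suc l. A j) = (\<Sum>j=2..l. A j)] (mod m)"
        unfolding sumeq using z by (metis add.right_neutral cong_add cong_refl)
      from IH show ?thesis
      proof
        assume a: "(\<forall>k\<in>{2..l}. [A k = 0] (mod m)) \<and> [(\<Sum>j=2..l. A j) = 0] (mod m)"
        show ?thesis apply (rule disjI1) using a z s iv by (auto intro: cong_trans)
      next
        assume "\<exists>s\<in>{2..l}. [A s = A 1] (mod m) \<and> (\<forall>k\<in>{2..l}-{s}. [A k = 0] (mod m))
       \<and> [(\<Sum>j=2..l. A j) = A 1] (mod m)"
        then obtain t where t: "t\<in>{2..l}" "[A t = A 1] (mod m)" "\<forall>k\<in>{2..l}-{t}. [A k = 0] (mod m)"
          "[(\<Sum>j=2..l. A j) = A 1] (mod m)" by blast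
        show ?thesis apply (rule disjI2) apply (rule bexI[of _ t])
          using t z s iv by (auto intro: cong_trans)
      qed
    next
      case nz: False
      then have hs: "[(\<Sum>j=2..Suc l. A j) = A 1] (mod m)" using hk by blast
      from IH show ?thesis
      proof
        assume a: "(\<forall>k\<in>{2..l}. [A k = 0] (mod m)) \<and> [(\<Sum>j=2..l. A j) = 0] (mod m)"
        have "[(\<Sum>j=2..Suc l. A j) = A (Suc l)] (mod m)"
          unfolding sumeq using a by (metis add_0 cong_add cong_refl)
        then have "[A (Suc l) = A 1] (mod m)" using hs by (meson cong_sym cong_trans)
        then show ?thesis apply - apply (rule disjI2) apply (rule bexI[of _ "Suc l"])
          using a hs iv by auto
      next
        assume "\<exists>s\<in>{2..l}. [A s = A 1] (mod m) \<and> (\<forall>k\<in>{2..l}-{s}. [A k = 0] (mod m))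
       \<and> [(\<Sum>j=2..l. A j) = A 1] (mod m)"
        then have h2: "[(\<Sum>j=2..l. A j) = A 1] (mod m)" by blast
        have "[(\<Sum>j=2..l. A j) + A (Suc l) = (\<Sum>j=2..l. A j) + 0] (mod m)"
          using hs h2 unfolding sumeq by (metis add.right_neutral cong_sym cong_trans)
        then have "[A (Suc l) = 0] (mod m)" using cong_add_lcancel by blast
        then show ?thesis using nz by blast
      qed
    qed
  qed
qed

lemma comb:
  fixes A :: "nat \<Rightarrow> int" and m :: int
  assumes "\<forall>k\<in>{2..l}. [(\<Sum>j=2..k. A j) = A 1] (mod m) \<or> [A k = 0] (mod m)"
  shows "\<exists>S\<subseteq>{2..l}. card S \<le> 1 \<and> (\<forall>k\<in>S. [A k = A 1] (mod m)) \<and> (\<forall>k\<in>{2..l}-S. [A k = 0] (mod m))"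
proof -
  from comb_aux[OF assms] show ?thesis
  proof
    assume "(\<forall>k\<in>{2..l}. [A k = 0] (mod m)) \<and> [(\<Sum>j=2..l. A j) = 0] (mod m)"
    then show ?thesis by (intro exI[of _ "{}"]) auto
  next
    assume "\<exists>s\<in>{2..l}. [A s = A 1] (mod m) \<and> (\<forall>k\<in>{2..l}-{s}. [A k = 0] (mod m))
       \<and> [(\<Sum>j=2..l. A j) = A 1] (mod m)"
    then obtain s where "s\<in>{2..l}" "[A s = A 1] (mod m)" "\<forall>k\<in>{2..l}-{s}. [A k = 0] (mod m)" by blast
    then show ?thesis by (intro exI[of _ "{s}"]) auto
  qed
qed

theorem theorem3:
  fixes G :: "('a, 'b) monoid_scheme"
    and q :: nat and g h :: 'a and n i l :: nat
    and Kp rp :: "nat \<Rightarrow> nat \<Rightarrow> nat \<Rightarrow> int"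
    and Oc :: "nat \<Rightarrow> int" and \<alpha> :: int
    and K r :: "nat \<Rightarrow> int" and c :: "nat \<Rightarrow> 'a"
  assumes grp: "comm_group G" and fin: "finite (carrier G)"
    and ord: "order G = q"
    and gG: "g \<in> carrier G" and hG: "h \<in> carrier G"
    and g_gen: "generate G {g} = carrier G" and h_gen: "generate G {h} = carrier G"
    and i_in: "i < n"
    and Kanti: "\<And>k j j'. [Kp k j' j = - Kp k j j'] (mod int q)"
    and ranti: "\<And>k j j'. [rp k j' j = - rp k j j'] (mod int q)"
    and K_def: "\<And>k. K k = (\<Sum>j\<in>{..<n} - {i}. Kp k i j)"
    and r_def: "\<And>k. r k = (\<Sum>j\<in>{..<n} - {i}. rp k i j)"
    and c_def: "\<And>k. c k = finprod G (\<lambda>j. pcommit G g h (Kp k i j) (rp k i j)) ({..<n} - {i})"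
    and cond: "\<forall>k\<in>{2..l}.
        (c 1 \<otimes>\<^bsub>G\<^esub> finprod G (\<lambda>j. inv\<^bsub>G\<^esub> (c j)) {2..k}
           = pcommit G g h (Oc 1 - (\<Sum>j=2..k. Oc j)) \<alpha>)
        \<or> (c k = pcommit G g h (Oc k) \<alpha>)"
  shows "(\<exists>S\<subseteq>{2..l}. card S \<le> 1
            \<and> (\<forall>k\<in>S. [Oc k - K k = Oc 1 - K 1] (mod int q))
            \<and> (\<forall>k\<in>{2..l} - S. [Oc k - K k = 0] (mod int q)))
         \<or> (\<exists>k\<in>{2..l}.
              pcollision G (int q) g h (K 1 - (\<Sum>j=2..k. K j), r 1 - (\<Sum>j=2..k. r j))
                                      (Oc 1 - (\<Sum>j=2..k. Oc j), \<alpha>)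
            \<or> pcollision G (int q) g h (K k, r k) (Oc k, \<alpha>))"
proof (cases "\<exists>k\<in>{2..l}.
              pcollision G (int q) g h (K 1 - (\<Sum>j=2..k. K j), r 1 - (\<Sum>j=2..k. r j))
                                      (Oc 1 - (\<Sum>j=2..k. Oc j), \<alpha>)
            \<or> pcollision G (int q) g h (K k, r k) (Oc k, \<alpha>)")
  case True
  then show ?thesis by blast
next
  case False
  interpret comm_group G by (rule grp)
  have ck: "c k = pcommit G g h (K k) (r k)" for k
    unfolding c_def K_def r_def by (rule pc_finprod) (use gG hG in auto)
  have cprod: "c 1 \<otimes>\<^bsub>G\<^esub> finprod G (\<lambda>j. inv\<^bsub>G\<^esub> (c j)) {2..k}
      = pcommit G g h (K 1 - (\<Sum>j=2..k. K j)) (r 1 - (\<Sum>j=2..k. r j))" for k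
  proof -
    have "finprod G (\<lambda>j. inv\<^bsub>G\<^esub> (c j)) {2..k} = finprod G (\<lambda>j. pcommit G g h (- K j) (- r j)) {2..k}"
      by (rule finprod_cong') (auto simp: ck pc_inv gG hG)
    also have "\<dots> = pcommit G g h (\<Sum>j=2..k. - K j) (\<Sum>j=2..k. - r j)"
      by (rule pc_finprod) (use gG hG in auto)
    finally show ?thesis using gG hG by (simp add: ck pc_mult sum_negf)
  qed
  have "\<forall>k\<in>{2..l}. [(\<Sum>j=2..k. Oc j - K j) = Oc 1 - K 1] (mod int q) \<or> [Oc k - K k = 0] (mod int q)"
  proof
    fix k assume k: "k \<in> {2..l}"
    from False k have n1: "\<not> pcollision G (int q) g h (K 1 - (\<Sum>j=2..k. K j), r 1 - (\<Sum>j=2..k. r j))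
                                      (Oc 1 - (\<Sum>j=2..k. Oc j), \<alpha>)"
      and n2: "\<not> pcollision G (int q) g h (K k, r k) (Oc k, \<alpha>)" by auto
    from cond k have dis: "c 1 \<otimes>\<^bsub>G\<^esub> finprod G (\<lambda>j. inv\<^bsub>G\<^esub> (c j)) {2..k} = pcommit G g h (Oc 1 - (\<Sum>j=2..k. Oc j)) \<alpha>
       \<or> c k = pcommit G g h (Oc k) \<alpha>" by blast
    show "[(\<Sum>j=2..k. Oc j - K j) = Oc 1 - K 1] (mod int q) \<or> [Oc k - K k = 0] (mod int q)"
      using dis
    proof
      assume "c 1 \<otimes>\<^bsub>G\<^esub> finprod G (\<lambda>j. inv\<^bsub>G\<^esub> (c j)) {2..k} = pcommit G g h (Oc 1 - (\<Sum>j=2..k. Oc j)) \<alpha>"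
      with n1 cprod have "[K 1 - (\<Sum>j=2..k. K j) = Oc 1 - (\<Sum>j=2..k. Oc j)] (mod int q)"
        unfolding pcollision_def by auto
      then have "int q dvd ((K 1 - (\<Sum>j=2..k. K j)) - (Oc 1 - (\<Sum>j=2..k. Oc j)))"
        by (simp add: cong_iff_dvd_diff)
      then have "int q dvd ((\<Sum>j=2..k. Oc j - K j) - (Oc 1 - K 1))"
        by (simp add: sum_subtractf algebra_simps)
      then have "[(\<Sum>j=2..k. Oc j - K j) = Oc 1 - K 1] (mod int q)" by (simp add: cong_iff_dvd_diff)
      then show ?thesis by blast
    next
      assume "c k = pcommit G g h (Oc k) \<alpha>"
      with n2 ck have "[K k = Oc k] (mod int q)"
        unfolding pcollision_def by auto
      then have "int q dvd (K k - Oc k)" by (simp add: cong_iff_dvd_diff)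
      then have "int q dvd (Oc k - K k - 0)" by (metis diff_zero dvd_minus_iff minus_diff_eq)
      then have "[Oc k - K k = 0] (mod int q)" by (simp add: cong_iff_dvd_diff)
      then show ?thesis by blast
    qed
  qed
  from comb[OF this] show ?thesis by blast
qed

end
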